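(* Let each $f_i:\mathbb{R}^d\to\mathbb{R}$ be $L_i$-smooth (not necessarily convex), $R=0$, and suppose $f^{\inf}=\inf_{x\in\mathbb{R}^d}f(x)>-\infty$. In EF-BV, suppose $\nu\in(0,1]$, $\lambda\in(0,1]$ is such that $r<1$, and $$0<\gamma\le\frac{1}{L+\tilde L\sqrt{\frac{r_{\mathrm{av}}}{r}}\frac1s}.$$ For every $t\ge1$, let $\hat x^t$ be chosen uniformly at random among $x^0,x^1,\dots,x^{t-1}$. Then $$\mathbb{E}\big[\|\nabla f(\hat x^t)\|^2\big]\le\frac{2\big(f(x^0)-f^{\inf}\big)}{\gamma t}+\frac{G^0}{\theta t},$$ where $G^0=\frac1n\sum_{i=1}^n\|\nabla f_i(x^0)-h_i^0\|^2$.
   Context: $f=\frac1n\sum_{i=1}^nf_i$ with each $f_i$ differentiable with $L_i$-Lipschitz gradient; $\tilde L=\sqrt{\frac1n\sum_iL_i^2}$ and $f$ is $L$-smooth with $L\le\tilde L$. For $\eta\in[0,1)$, $\omega\ge0$, $\mathbb{C}(\eta,\omega)$ is the class of randomized operators $\mathcal{C}:\mathbb{R}^d\to\mathbb{R}^d$ with $\|\mathbb{E}[\mathcal{C}(x)]-x\|\le\eta\|x\|$ and $\mathbb{E}\|\mathcal{C}(x)-\mathbb{E}[\mathcal{C}(x)]\|^2\le\omega\|x\|^2$ for all $x$. Compressors $\mathcal{C}_i^t$ ($i=1,\dots,n$, $t\ge0$) all lie in $\mathbb{C}(\eta,\omega)$; those used at iteration $t$ are independent of all randomness of previous iterations; $\omega_{\mathrm{av}}\in[0,\omega]$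 satisfies, for every $t$ and all $x_1,\dots,x_n$, $\mathbb{E}\|\frac1n\sum_i(\mathcal{C}_i^t(x_i)-\mathbb{E}[\mathcal{C}_i^t(x_i)])\|^2\le\frac{\omega_{\mathrm{av}}}{n}\sum_i\|x_i\|^2$. Algorithm EF-BV (with $R=0$): given $x^0,h_1^0,\dots,h_n^0$, $\gamma>0$, $\lambda,\nu\in(0,1]$, $h^0=\frac1n\sum_ih_i^0$; for $t\ge0$: $d_i^t=\mathcal{C}_i^t(\nabla f_i(x^t)-h_i^t)$, $h_i^{t+1}=h_i^t+\lambda d_i^t$, $d^t=\frac1n\sum_id_i^t$, $h^{t+1}=h^t+\lambda d^t$, $g^{t+1}=h^t+\nu d^t$, $x^{t+1}=x^t-\gamma g^{t+1}$. Constants: $r=(1-\lambda+\lambda\eta)^2+\lambda^2\omega$, $r_{\mathrm{av}}=(1-\nu+\nu\eta)^2+\nu^2\omega_{\mathrm{av}}$, $s=\frac{1}{\sqrt r}-1$, $\theta=s(1+s)\frac{r}{r_{\mathrm{av}}}$ (with $r>0$, $r_{\mathrm{av}}>0$). *)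

theory Defs
  imports "HOL-Probability.Probability"
begin

text \<open>EF-BV with R = 0.  Indices i range over {..<n} (i.e. 0..n-1 instead of 1..n).
  The randomness of iteration t is a seed w t drawn from the probability space P t;
  the whole run is driven by a seed sequence w :: nat => 'w, distributed according
  to the product measure PiM UNIV P (so seeds of different iterations are independent).
  The compressor C_i^t is the random operator C i t (w t).
  State after t steps: (x^t, (h_i^t)_i, h^t).\<close>

fun efbv_state ::
  "(nat \<Rightarrow> nat \<Rightarrow> 'w \<Rightarrow> real^'d \<Rightarrow> real^'d) \<Rightarrow> (nat \<Rightarrow> real^'d \<Rightarrow> real^'d) \<Rightarrow> nat \<Rightarrow>
   real \<Rightarrow> real \<Rightarrow> real \<Rightarrow> real^'d \<Rightarrow> (nat \<Rightarrow> real^'d) \<Rightarrow> (nat \<Rightarrow> 'w) \<Rightarrow> nat \<Rightarrow>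
   (real^'d) \<times> (nat \<Rightarrow> real^'d) \<times> (real^'d)"
where
  "efbv_state C gf n gamma lam nu x0 h0 w 0 = (x0, h0, (1 / real n) *\<^sub>R (\<Sum>i<n. h0 i))"
| "efbv_state C gf n gamma lam nu x0 h0 w (Suc t) =
     (let (x, hi, h) = efbv_state C gf n gamma lam nu x0 h0 w t;
          d = (\<lambda>i. C i t (w t) (gf i x - hi i));
          dbar = (1 / real n) *\<^sub>R (\<Sum>i<n. d i);
          g = h + nu *\<^sub>R dbar
      in (x - gamma *\<^sub>R g, (\<lambda>i. hi i + lam *\<^sub>R d i), h + lam *\<^sub>R dbar))"

definition efbv_x where
  "efbv_x C gf n gamma lam nu x0 h0 w t = fst (efbv_state C gf n gamma lam nu x0 h0 w t)"

definition ef_r :: "real \<Rightarrow> real \<Rightarrow> real \<Rightarrow> real" where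
  "ef_r eta om lam = (1 - lam + lam * eta)^2 + lam^2 * om"

definition ef_s :: "real \<Rightarrow> real" where
  "ef_s r = 1 / sqrt r - 1"

definition ef_theta :: "real \<Rightarrow> real \<Rightarrow> real" where
  "ef_theta r r_av = ef_s r * (1 + ef_s r) * (r / r_av)"

end

theory Submission
  imports Defs
begin

lemma norm_avg_sq:
  fixes a :: "nat \<Rightarrow> 'a::real_normed_vector"
  assumes "n \<ge> 1"
  shows "(norm ((1/real n) *\<^sub>R (\<Sum>i<n. a i)))^2 \<le> (1/real n) * (\<Sum>i<n. (norm (a i))^2)"
proof -
  have np: "real n > 0" using assms by simp
  have "norm ((1/real n) *\<^sub>R (\<Sum>i<n. a i)) = (1/real n) * norm (\<Sum>i<n. a i)" by simp
  also have "\<dots> \<le> (1/real n) * (\<Sum>i<n. norm (a i))"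
    by (rule mult_left_mono[OF norm_sum]) simp
  finally have 1: "norm ((1/real n) *\<^sub>R (\<Sum>i<n. a i)) \<le> (1/real n) * (\<Sum>i<n. norm (a i))" .
  have cs: "(\<Sum>i<n. 1 * norm (a i))^2 \<le> (\<Sum>i<n. 1^2) * (\<Sum>i<n. (norm (a i))^2)"
    by (rule Cauchy_Schwarz_ineq_sum)
  have "(norm ((1/real n) *\<^sub>R (\<Sum>i<n. a i)))^2 \<le> ((1/real n) * (\<Sum>i<n. norm (a i)))^2"
    using 1 by (intro power_mono) auto
  also have "\<dots> = (1/real n)^2 * (\<Sum>i<n. norm (a i))^2" by (simp only: power_mult_distrib)
  also have "\<dots> \<le> (1/real n)^2 * (real n * (\<Sum>i<n. (norm (a i))^2))"
    using cs by (intro mult_left_mono) auto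
  also have "\<dots> = (1/real n) * (\<Sum>i<n. (norm (a i))^2)" using np by (simp add: power2_eq_square)
  finally show ?thesis .
qed

lemma young_norm:
  fixes a b :: "'a::real_inner"
  assumes s: "s > 0"
  shows "(norm (a+b))^2 \<le> (1+1/s)*(norm a)^2 + (1+s)*(norm b)^2"
proof -
  have e: "(norm (a+b))^2 = (norm a)^2 + 2 * (a \<bullet> b) + (norm b)^2"
    by (simp add: power2_norm_eq_inner inner_add_left inner_add_right inner_commute)
  have "a \<bullet> b \<le> norm a * norm b" by (rule norm_cauchy_schwarz)
  moreover have "0 \<le> s * (norm a / s - norm b)^2" using s by simp
  moreover have "s * (norm a / s - norm b)^2 = (norm a)^2 / s - 2 * norm a * norm b + s * (norm b)^2"
    using s by (simp add: power2_eq_square field_simps)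
  moreover have "(1+1/s)*(norm a)^2 = (norm a)^2 + (norm a)^2/s" by (simp add: distrib_right)
  ultimately show ?thesis using e by (simp add: algebra_simps)
qed

lemma bias_var:
  fixes Y :: "'b \<Rightarrow> 'a::euclidean_space"
  assumes M: "prob_space M" and iY: "integrable M Y"
    and iV: "integrable M (\<lambda>\<xi>. (norm (Y \<xi> - (\<integral>\<xi>'. Y \<xi>' \<partial>M)))^2)"
  shows "integrable M (\<lambda>\<xi>. (norm (Y \<xi> - a))^2)"
    and "(\<integral>\<xi>. (norm (Y \<xi> - a))^2 \<partial>M) = (norm ((\<integral>\<xi>. Y \<xi> \<partial>M) - a))^2 + (\<integral>\<xi>. (norm (Y \<xi> - (\<integral>\<xi>'. Y \<xi>' \<partial>M)))^2 \<partial>M)"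
proof -
  interpret prob_space M by (rule M)
  define m where "m = (\<integral>\<xi>. Y \<xi> \<partial>M)"
  have e: "\<And>\<xi>. (norm (Y \<xi> - a))^2 = (norm (Y \<xi> - m))^2 + 2 * ((Y \<xi> - m) \<bullet> (m - a)) + (norm (m - a))^2"
  proof -
    fix \<xi>
    have "Y \<xi> - a = (Y \<xi> - m) + (m - a)" by simp
    then show "(norm (Y \<xi> - a))^2 = (norm (Y \<xi> - m))^2 + 2 * ((Y \<xi> - m) \<bullet> (m - a)) + (norm (m - a))^2"
    proof -
      have "(norm (u + v))^2 = (norm u)^2 + 2 * (u \<bullet> v) + (norm v)^2" for u v :: 'a
        by (simp add: power2_norm_eq_inner inner_add_left inner_add_right inner_commute)
      from this[of "Y \<xi> - m" "m - a"] show ?thesis by simp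
    qed
  qed
  have iYm: "integrable M (\<lambda>\<xi>. Y \<xi> - m)" using iY by simp
  have i2: "integrable M (\<lambda>\<xi>. 2 * ((Y \<xi> - m) \<bullet> (m - a)))"
    using iYm by (intro integrable_mult_right integrable_inner_left)
  have iV': "integrable M (\<lambda>\<xi>. (norm (Y \<xi> - m))^2)" using iV unfolding m_def .
  have iall: "integrable M (\<lambda>\<xi>. (norm (Y \<xi> - m))^2 + 2 * ((Y \<xi> - m) \<bullet> (m - a)) + (norm (m - a))^2)"
    using iV' i2 by (intro Bochner_Integration.integrable_add) auto
  then show "integrable M (\<lambda>\<xi>. (norm (Y \<xi> - a))^2)" by (simp only: e)
  have z: "(\<integral>\<xi>. 2 * ((Y \<xi> - m) \<bullet> (m - a)) \<partial>M) = 0"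
  proof -
    have "(\<integral>\<xi>. (Y \<xi> - m) \<bullet> (m - a) \<partial>M) = (\<integral>\<xi>. Y \<xi> - m \<partial>M) \<bullet> (m - a)"
      using iYm by (rule integral_inner_left)
    also have "(\<integral>\<xi>. Y \<xi> - m \<partial>M) = 0" using iY by (simp add: m_def prob_space)
    finally show ?thesis by simp
  qed
  have "(\<integral>\<xi>. (norm (Y \<xi> - a))^2 \<partial>M) = (\<integral>\<xi>. (norm (Y \<xi> - m))^2 + 2 * ((Y \<xi> - m) \<bullet> (m - a)) + (norm (m - a))^2 \<partial>M)"
    by (simp only: e)
  also have "\<dots> = (\<integral>\<xi>. (norm (Y \<xi> - m))^2 \<partial>M) + (\<integral>\<xi>. 2 * ((Y \<xi> - m) \<bullet> (m - a)) \<partial>M) + (norm (m - a))^2"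
    using iV' i2 by (simp add: prob_space)
  finally show "(\<integral>\<xi>. (norm (Y \<xi> - a))^2 \<partial>M) = (norm ((\<integral>\<xi>. Y \<xi> \<partial>M) - a))^2 + (\<integral>\<xi>. (norm (Y \<xi> - (\<integral>\<xi>'. Y \<xi>' \<partial>M)))^2 \<partial>M)"
    using z by (simp add: m_def)
qed

lemma descent:
  fixes F :: "'a::real_inner \<Rightarrow> real"
  assumes grad: "\<forall>x. GDERIV F x :> gF x"
    and lip: "\<forall>x y. norm (gF x - gF y) \<le> L * norm (x - y)"
  shows "F y \<le> F x + gF x \<bullet> (y - x) + L/2 * (norm (y - x))^2"
proof -
  define v where "v = y - x"
  define \<psi> where "\<psi> \<tau> = F (x + \<tau> *\<^sub>R v) - \<tau> * (gF x \<bullet> v) - L/2 * \<tau>^2 * (norm v)^2" for \<tau> :: real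
  have dF: "((\<lambda>\<tau>. F (x + \<tau> *\<^sub>R v)) has_real_derivative (gF (x + \<tau> *\<^sub>R v) \<bullet> v)) (at \<tau>)" for \<tau>
  proof -
    have h1: "((\<lambda>\<tau>. x + \<tau> *\<^sub>R v) has_derivative (\<lambda>h. h *\<^sub>R v)) (at \<tau>)"
      by (auto intro!: derivative_eq_intros)
    have h2: "(F has_derivative (\<lambda>h. h \<bullet> gF (x + \<tau> *\<^sub>R v))) (at (x + \<tau> *\<^sub>R v))"
      using grad unfolding gderiv_def by blast
    have "((\<lambda>\<tau>. F (x + \<tau> *\<^sub>R v)) has_derivative (\<lambda>h. (h *\<^sub>R v) \<bullet> gF (x + \<tau> *\<^sub>R v))) (at \<tau>)"
      using has_derivative_compose[OF h1 h2] .
    moreover have "(\<lambda>h. (h *\<^sub>R v) \<bullet> gF (x + \<tau> *\<^sub>R v)) = (*) (gF (x + \<tau> *\<^sub>R v) \<bullet> v)"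
      by (auto simp: fun_eq_iff inner_commute)
    ultimately show ?thesis unfolding has_field_derivative_def by simp
  qed
  have d\<psi>: "(\<psi> has_real_derivative (gF (x + \<tau> *\<^sub>R v) \<bullet> v - gF x \<bullet> v - L * \<tau> * (norm v)^2)) (at \<tau>)" for \<tau>
    unfolding \<psi>_def
    by (rule DERIV_diff[OF DERIV_diff[OF dF], THEN DERIV_cong]) (auto intro!: derivative_eq_intros simp: power2_eq_square)
  have nonpos: "gF (x + \<tau> *\<^sub>R v) \<bullet> v - gF x \<bullet> v - L * \<tau> * (norm v)^2 \<le> 0" if "0 \<le> \<tau>" for \<tau>
  proof -
    have "gF (x + \<tau> *\<^sub>R v) \<bullet> v - gF x \<bullet> v = (gF (x + \<tau> *\<^sub>R v) - gF x) \<bullet> v"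
      by (simp add: inner_diff_left)
    also have "\<dots> \<le> norm (gF (x + \<tau> *\<^sub>R v) - gF x) * norm v" by (rule norm_cauchy_schwarz)
    also have "\<dots> \<le> (L * norm (\<tau> *\<^sub>R v)) * norm v"
      using lip[rule_format, of "x + \<tau> *\<^sub>R v" x] by (intro mult_right_mono) auto
    also have "\<dots> = L * \<tau> * (norm v)^2" using that by (simp add: power2_eq_square)
    finally show ?thesis by simp
  qed
  have "\<psi> 1 \<le> \<psi> 0"
  proof (rule DERIV_nonpos_imp_nonincreasing[of 0 1])
    fix \<tau> :: real assume "0 \<le> \<tau>" "\<tau> \<le> 1"
    then show "\<exists>y. (\<psi> has_real_derivative y) (at \<tau>) \<and> y \<le> 0" using d\<psi>[of \<tau>] nonpos[of \<tau>] by blast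
  qed simp
  then show ?thesis by (simp add: \<psi>_def v_def)
qed

lemma grad_avg:
  fixes f :: "nat \<Rightarrow> 'a::real_inner \<Rightarrow> real"
  assumes grad_i: "\<forall>i<n. \<forall>x. GDERIV (f i) x :> gf i x"
    and F_def: "F = (\<lambda>x. (1 / real n) * (\<Sum>i<n. f i x))"
    and grad_F: "\<forall>x. GDERIV F x :> gF x"
  shows "gF x = (1/real n) *\<^sub>R (\<Sum>i<n. gf i x)"
proof -
  define A where "A = (1/real n) *\<^sub>R (\<Sum>i<n. gf i x)"
  have "((\<lambda>x. \<Sum>i<n. f i x) has_derivative (\<lambda>h. \<Sum>i<n. h \<bullet> gf i x)) (at x)"
    using grad_i unfolding gderiv_def by (intro has_derivative_sum) auto
  then have "(F has_derivative (\<lambda>h. (1/real n) * (\<Sum>i<n. h \<bullet> gf i x))) (at x)"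
    unfolding F_def by (rule has_derivative_mult_right)
  moreover have "(\<lambda>h. (1/real n) * (\<Sum>i<n. h \<bullet> gf i x)) = (\<lambda>h. h \<bullet> A)"
    by (auto simp: fun_eq_iff A_def inner_sum_right)
  ultimately have d1: "(F has_derivative (\<lambda>h. h \<bullet> A)) (at x)" by simp
  have d2: "(F has_derivative (\<lambda>h. h \<bullet> gF x)) (at x)" using grad_F unfolding gderiv_def by blast
  have "(\<lambda>h. h \<bullet> A) = (\<lambda>h. h \<bullet> gF x)" by (rule has_derivative_unique[OF d1 d2])
  then have "(gF x - A) \<bullet> A = (gF x - A) \<bullet> gF x" by metis
  then have "(gF x - A) \<bullet> (gF x - A) = 0" by (simp add: inner_diff_right)
  then show ?thesis unfolding A_def by simp
qed

lemma alg1: "(Fx::real) - g/2*Z - g/2*(1-L*g)*N + g/2*(N - 2*D + Z) = Fx + (- g*D) + L/2*(g^2*N)"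
  by (simp add: field_simps power2_eq_square)

lemma one_step:
  fixes M :: "'w measure" and Ck :: "nat \<Rightarrow> 'w \<Rightarrow> 'a::euclidean_space \<Rightarrow> 'a"
    and gf :: "nat \<Rightarrow> 'a \<Rightarrow> 'a" and F :: "'a \<Rightarrow> real" and gF :: "'a \<Rightarrow> 'a"
    and hi :: "nat \<Rightarrow> 'a"
  assumes n_pos: "n \<ge> 1"
    and M: "prob_space M"
    and gF_eq: "gF x = (1/real n) *\<^sub>R (\<Sum>i<n. gf i x)"
    and h_eq: "h = (1/real n) *\<^sub>R (\<Sum>i<n. hi i)"
    and descent: "\<And>y. F y \<le> F x + gF x \<bullet> (y - x) + L/2 * (norm (y - x))^2"
    and lip_i: "\<forall>i<n. \<forall>x y. norm (gf i x - gf i y) \<le> Lf i * norm (x - y)"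
    and Lf_nonneg: "\<forall>i<n. 0 \<le> Lf i"
    and Finf: "\<And>z. Finf \<le> F z"
    and C_int: "\<forall>i<n. \<forall>x. integrable M (\<lambda>\<xi>. Ck i \<xi> x)"
    and C_bias: "\<forall>i<n. \<forall>x. norm ((\<integral>\<xi>. Ck i \<xi> x \<partial>M) - x) \<le> eta * norm x"
    and C_var_int: "\<forall>i<n. \<forall>x. integrable M
          (\<lambda>\<xi>. (norm (Ck i \<xi> x - (\<integral>\<xi>'. Ck i \<xi>' x \<partial>M)))^2)"
    and C_var: "\<forall>i<n. \<forall>x.
          (\<integral>\<xi>. (norm (Ck i \<xi> x - (\<integral>\<xi>'. Ck i \<xi>' x \<partial>M)))^2 \<partial>M) \<le> om * (norm x)^2"
    and eta_ge: "0 \<le> eta"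
    and C_av: "\<forall>(xs :: nat \<Rightarrow> 'a).
          (\<integral>\<xi>. (norm ((1 / real n) *\<^sub>R (\<Sum>i<n. Ck i \<xi> (xs i) - (\<integral>\<xi>'. Ck i \<xi>' (xs i) \<partial>M))))^2 \<partial>M)
            \<le> om_av / real n * (\<Sum>i<n. (norm (xs i))^2)"
    and nu_pos: "0 < nu" and nu_le: "nu \<le> 1"
    and lam_pos: "0 < lam" and lam_le: "lam \<le> 1"
    and gamma_pos: "0 < gamma"
    and K_nonneg: "0 \<le> K" and s_pos: "0 < s"
    and coef1: "K * (1 + s) * ef_r eta om lam + gamma / 2 * ef_r eta om_av nu \<le> K"
    and coef2: "K * (1 + 1/s) * ((1/real n) * (\<Sum>i<n. (Lf i)^2)) * gamma^2 \<le> gamma / 2 * (1 - L * gamma)"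
  shows "(\<integral>\<^sup>+\<xi>. ennreal (F (x - gamma *\<^sub>R (h + nu *\<^sub>R ((1/real n) *\<^sub>R (\<Sum>i<n. Ck i \<xi> (gf i x - hi i))))) - Finf
            + K * ((1/real n) * (\<Sum>i<n. (norm (gf i (x - gamma *\<^sub>R (h + nu *\<^sub>R ((1/real n) *\<^sub>R (\<Sum>i<n. Ck i \<xi> (gf i x - hi i)))))
                 - (hi i + lam *\<^sub>R Ck i \<xi> (gf i x - hi i))))^2))) \<partial>M)
         + ennreal (gamma/2 * (norm (gF x))^2)
         \<le> ennreal (F x - Finf + K * ((1/real n) * (\<Sum>i<n. (norm (gf i x - hi i))^2)))"
proof -
  interpret prob_space M by (rule M)
  have np: "real n > 0" using n_pos by simp
  define v where "v i = gf i x - hi i" for i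
  define c where "c i \<xi> = Ck i \<xi> (v i)" for i \<xi>
  define m where "m i = (\<integral>\<xi>. c i \<xi> \<partial>M)" for i
  define G where "G = (1/real n) * (\<Sum>i<n. (norm (v i))^2)"
  define L2 where "L2 = (1/real n) * (\<Sum>i<n. (Lf i)^2)"
  define Y where "Y \<xi> = nu *\<^sub>R ((1/real n) *\<^sub>R (\<Sum>i<n. c i \<xi>))" for \<xi>
  define a where "a = gF x - h"
  define g where "g \<xi> = h + Y \<xi>" for \<xi>
  define x' where "x' \<xi> = x - gamma *\<^sub>R g \<xi>" for \<xi>
  define Q where "Q \<xi> = F (x' \<xi>) - Finf + K * ((1/real n) * (\<Sum>i<n. (norm (gf i (x' \<xi>) - (hi i + lam *\<^sub>R c i \<xi>)))^2))" for \<xi>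
  define E2 where "E2 i \<xi> = (norm (lam *\<^sub>R c i \<xi> - v i))^2" for i \<xi>
  define B where "B \<xi> = F x - Finf - gamma/2 * (norm (gF x))^2 + gamma/2 * (norm (Y \<xi> - a))^2
      + K * (1 + s) * ((1/real n) * (\<Sum>i<n. E2 i \<xi>))" for \<xi>
  have a_eq: "a = (1/real n) *\<^sub>R (\<Sum>i<n. v i)"
    by (simp add: a_def gF_eq h_eq v_def sum_subtractf scaleR_diff_right)
  have L2_nonneg: "0 \<le> L2" unfolding L2_def by (intro mult_nonneg_nonneg sum_nonneg) auto
  have G_nonneg: "0 \<le> G" unfolding G_def by (intro mult_nonneg_nonneg sum_nonneg) auto
  have QB: "Q \<xi> \<le> B \<xi>" for \<xi>
  proof -
    have gx: "g \<xi> - gF x = Y \<xi> - a" by (simp add: g_def a_def)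
    have F1: "F (x' \<xi>) \<le> F x - gamma/2 * (norm (gF x))^2 - gamma/2 * (1 - L * gamma) * (norm (g \<xi>))^2
              + gamma/2 * (norm (Y \<xi> - a))^2"
    proof -
      have "F (x' \<xi>) \<le> F x + gF x \<bullet> (x' \<xi> - x) + L/2 * (norm (x' \<xi> - x))^2" by (rule descent)
      moreover have "x' \<xi> - x = - (gamma *\<^sub>R g \<xi>)" by (simp add: x'_def)
      moreover have "(norm (g \<xi> - gF x))^2 = (norm (g \<xi>))^2 - 2 * (gF x \<bullet> g \<xi>) + (norm (gF x))^2"
        by (simp add: power2_norm_eq_inner inner_diff_left inner_diff_right inner_commute)
      moreover have "gF x \<bullet> (x' \<xi> - x) = - gamma * (gF x \<bullet> g \<xi>)" by (simp add: x'_def)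
      moreover have "(norm (x' \<xi> - x))^2 = gamma^2 * (norm (g \<xi>))^2"
        using gamma_pos by (simp add: x'_def power_mult_distrib)
      moreover have "(norm (Y \<xi> - a))^2 = (norm (g \<xi>))^2 - 2 * (gF x \<bullet> g \<xi>) + (norm (gF x))^2"
      proof -
        have "(norm (Y \<xi> - a))^2 = (norm (g \<xi> - gF x))^2" using gx by simp
        also have "\<dots> = (norm (g \<xi>))^2 - 2 * (gF x \<bullet> g \<xi>) + (norm (gF x))^2"
          by (simp add: power2_norm_eq_inner inner_diff_left inner_diff_right inner_commute)
        finally show ?thesis .
      qed
      ultimately have d: "F (x' \<xi>) \<le> F x + (- gamma * (gF x \<bullet> g \<xi>)) + L/2 * (gamma^2 * (norm (g \<xi>))^2)"
        and w: "(norm (Y \<xi> - a))^2 = (norm (g \<xi>))^2 - 2 * (gF x \<bullet> g \<xi>) + (norm (gF x))^2"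
        by simp_all
      show ?thesis using alg1[of "F x" gamma "(norm (gF x))^2" L "(norm (g \<xi>))^2" "gF x \<bullet> g \<xi>"] d unfolding w by linarith
    qed
    have F2: "(1/real n) * (\<Sum>i<n. (norm (gf i (x' \<xi>) - (hi i + lam *\<^sub>R c i \<xi>)))^2)
        \<le> (1 + 1/s) * L2 * gamma^2 * (norm (g \<xi>))^2 + (1 + s) * ((1/real n) * (\<Sum>i<n. E2 i \<xi>))"
    proof -
      have "(norm (gf i (x' \<xi>) - (hi i + lam *\<^sub>R c i \<xi>)))^2
          \<le> (1 + 1/s) * ((Lf i)^2 * gamma^2 * (norm (g \<xi>))^2) + (1 + s) * E2 i \<xi>" if i: "i < n" for i
      proof -
        have "gf i (x' \<xi>) - (hi i + lam *\<^sub>R c i \<xi>) = (gf i (x' \<xi>) - gf i x) + (v i - lam *\<^sub>R c i \<xi>)"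
          by (simp add: v_def)
        then have "(norm (gf i (x' \<xi>) - (hi i + lam *\<^sub>R c i \<xi>)))^2
            \<le> (1 + 1/s) * (norm (gf i (x' \<xi>) - gf i x))^2 + (1 + s) * (norm (v i - lam *\<^sub>R c i \<xi>))^2"
          using young_norm[OF s_pos] by metis
        moreover have "norm (gf i (x' \<xi>) - gf i x) \<le> Lf i * (gamma * norm (g \<xi>))"
          using lip_i[rule_format, OF i, of "x' \<xi>" x] gamma_pos by (simp add: x'_def)
        then have "(norm (gf i (x' \<xi>) - gf i x))^2 \<le> (Lf i * (gamma * norm (g \<xi>)))^2"
          by (intro power_mono) auto
        moreover have "(1 + s) * (norm (v i - lam *\<^sub>R c i \<xi>))^2 = (1 + s) * E2 i \<xi>" by (simp add: E2_def norm_minus_commute)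
        moreover have "(1+1/s) * (norm (gf i (x' \<xi>) - gf i x))^2 \<le> (1+1/s) * ((Lf i)^2 * gamma^2 * (norm (g \<xi>))^2)"
          using calculation(2) s_pos by (intro mult_left_mono) (auto simp: power_mult_distrib)
        ultimately show ?thesis by linarith
      qed
      then have "(\<Sum>i<n. (norm (gf i (x' \<xi>) - (hi i + lam *\<^sub>R c i \<xi>)))^2)
          \<le> (\<Sum>i<n. (1 + 1/s) * ((Lf i)^2 * gamma^2 * (norm (g \<xi>))^2) + (1 + s) * E2 i \<xi>)"
        by (intro sum_mono) auto
      also have "\<dots> = (1 + 1/s) * gamma^2 * (norm (g \<xi>))^2 * (\<Sum>i<n. (Lf i)^2) + (1 + s) * (\<Sum>i<n. E2 i \<xi>)"
        by (simp add: sum.distrib sum_distrib_left sum_distrib_right sum_divide_distrib algebra_simps)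
      finally have "(1/real n) * (\<Sum>i<n. (norm (gf i (x' \<xi>) - (hi i + lam *\<^sub>R c i \<xi>)))^2)
          \<le> (1/real n) * ((1 + 1/s) * gamma^2 * (norm (g \<xi>))^2 * (\<Sum>i<n. (Lf i)^2) + (1 + s) * (\<Sum>i<n. E2 i \<xi>))"
        by (rule mult_left_mono) simp
      also have "\<dots> = (1 + 1/s) * L2 * gamma^2 * (norm (g \<xi>))^2 + (1 + s) * ((1/real n) * (\<Sum>i<n. E2 i \<xi>))"
        using s_pos np by (simp add: L2_def field_simps)
      finally show ?thesis .
    qed
    have "Q \<xi> \<le> F x - gamma/2 * (norm (gF x))^2 - gamma/2 * (1 - L * gamma) * (norm (g \<xi>))^2
              + gamma/2 * (norm (Y \<xi> - a))^2 - Finf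
              + K * ((1 + 1/s) * L2 * gamma^2 * (norm (g \<xi>))^2 + (1 + s) * ((1/real n) * (\<Sum>i<n. E2 i \<xi>)))"
      unfolding Q_def using F1 mult_left_mono[OF F2 K_nonneg] by linarith
    moreover have "K * (1 + 1/s) * L2 * gamma^2 * (norm (g \<xi>))^2 \<le> gamma/2 * (1 - L * gamma) * (norm (g \<xi>))^2"
      using coef2 unfolding L2_def by (intro mult_right_mono) auto
    moreover have "K * ((1 + 1/s) * L2 * gamma^2 * (norm (g \<xi>))^2 + (1 + s) * ((1/real n) * (\<Sum>i<n. E2 i \<xi>)))
       = K * (1 + 1/s) * L2 * gamma^2 * (norm (g \<xi>))^2 + K * (1 + s) * ((1/real n) * (\<Sum>i<n. E2 i \<xi>))"
      by (simp add: algebra_simps)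
    ultimately show ?thesis unfolding B_def by linarith
  qed
  have Q_nonneg: "0 \<le> Q \<xi>" for \<xi>
  proof -
    have "0 \<le> K * ((1/real n) * (\<Sum>i<n. (norm (gf i (x' \<xi>) - (hi i + lam *\<^sub>R c i \<xi>)))^2))"
      using K_nonneg by (intro mult_nonneg_nonneg sum_nonneg) auto
    then show ?thesis unfolding Q_def using Finf[of "x' \<xi>"] by linarith
  qed
  have ic: "integrable M (c i)" if "i < n" for i unfolding c_def using C_int that by blast
  have mc: "c i \<in> borel_measurable M" if "i < n" for i using ic[OF that] by (rule borel_measurable_integrable)
  have iV: "integrable M (\<lambda>\<xi>. (norm (c i \<xi> - m i))^2)" if "i < n" for i
    unfolding c_def m_def using C_var_int that by blast
  have E2_int: "integrable M (E2 i)" and E2_bd: "(\<integral>\<xi>. E2 i \<xi> \<partial>M) \<le> ef_r eta om lam * (norm (v i))^2"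
    if i: "i < n" for i
  proof -
    have iY: "integrable M (\<lambda>\<xi>. lam *\<^sub>R c i \<xi>)" using ic[OF i] by simp
    have mY: "(\<integral>\<xi>. lam *\<^sub>R c i \<xi> \<partial>M) = lam *\<^sub>R m i" by (simp add: m_def)
    have eV: "(norm (lam *\<^sub>R c i \<xi> - lam *\<^sub>R m i))^2 = lam^2 * (norm (c i \<xi> - m i))^2" for \<xi>
      using lam_pos by (simp add: scaleR_diff_right[symmetric] power_mult_distrib)
    have iVY: "integrable M (\<lambda>\<xi>. (norm (lam *\<^sub>R c i \<xi> - (\<integral>\<xi>'. lam *\<^sub>R c i \<xi>' \<partial>M)))^2)"
      unfolding mY eV using iV[OF i] by simp
    note bv = bias_var[OF M iY iVY, of "v i"]
    show "integrable M (E2 i)" unfolding E2_def using bv(1) .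
    have "(\<integral>\<xi>. E2 i \<xi> \<partial>M) = (norm (lam *\<^sub>R m i - v i))^2 + lam^2 * (\<integral>\<xi>. (norm (c i \<xi> - m i))^2 \<partial>M)"
      unfolding E2_def bv(2) mY eV by simp
    also have "\<dots> \<le> ((1 - lam + lam * eta) * norm (v i))^2 + lam^2 * (om * (norm (v i))^2)"
    proof (rule add_mono)
      have "lam *\<^sub>R m i - v i = lam *\<^sub>R (m i - v i) - (1 - lam) *\<^sub>R v i" by (simp add: algebra_simps)
      then have "norm (lam *\<^sub>R m i - v i) \<le> lam * norm (m i - v i) + (1 - lam) * norm (v i)"
        using lam_pos lam_le by (metis norm_triangle_ineq4 norm_scaleR abs_of_nonneg less_imp_le diff_ge_0_iff_ge)
      also have "\<dots> \<le> lam * (eta * norm (v i)) + (1 - lam) * norm (v i)"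
        using C_bias i lam_pos unfolding m_def c_def by (auto intro!: mult_left_mono)
      finally show "(norm (lam *\<^sub>R m i - v i))^2 \<le> ((1 - lam + lam * eta) * norm (v i))^2"
        by (intro power_mono) (auto simp: algebra_simps)
      show "lam^2 * (\<integral>\<xi>. (norm (c i \<xi> - m i))^2 \<partial>M) \<le> lam^2 * (om * (norm (v i))^2)"
        using C_var i unfolding m_def c_def by (intro mult_left_mono) auto
    qed
    also have "\<dots> = ef_r eta om lam * (norm (v i))^2" by (simp add: ef_r_def power2_eq_square algebra_simps)
    finally show "(\<integral>\<xi>. E2 i \<xi> \<partial>M) \<le> ef_r eta om lam * (norm (v i))^2" .
  qed
  have iS: "integrable M (\<lambda>\<xi>. \<Sum>i<n. c i \<xi>)" by (rule Bochner_Integration.integrable_sum) (use ic in auto)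
  have iY: "integrable M Y" unfolding Y_def using iS by simp
  have mY: "(\<integral>\<xi>. Y \<xi> \<partial>M) = nu *\<^sub>R ((1/real n) *\<^sub>R (\<Sum>i<n. m i))"
  proof -
    have "(\<integral>\<xi>. (\<Sum>i<n. c i \<xi>) \<partial>M) = (\<Sum>i<n. \<integral>\<xi>. c i \<xi> \<partial>M)"
      by (rule Bochner_Integration.integral_sum) (use ic in auto)
    then show ?thesis unfolding Y_def m_def by simp
  qed
  define W where "W \<xi> = (norm ((1 / real n) *\<^sub>R (\<Sum>i<n. c i \<xi> - m i)))^2" for \<xi>
  have Yd: "(norm (Y \<xi> - (\<integral>\<xi>'. Y \<xi>' \<partial>M)))^2 = nu^2 * W \<xi>" for \<xi>
  proof -
    have "Y \<xi> - (\<integral>\<xi>'. Y \<xi>' \<partial>M) = nu *\<^sub>R ((1 / real n) *\<^sub>R (\<Sum>i<n. c i \<xi> - m i))"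
      by (subst mY) (simp add: Y_def sum_subtractf scaleR_diff_right)
    then show ?thesis using nu_pos by (simp add: W_def power_mult_distrib power_divide)
  qed
  have iW: "integrable M W"
  proof (rule Bochner_Integration.integrable_bound)
    have "integrable M (\<lambda>\<xi>. (\<Sum>i<n. (norm (c i \<xi> - m i))^2))"
      by (rule Bochner_Integration.integrable_sum) (use iV in auto)
    then show "integrable M (\<lambda>\<xi>. (1/real n) * (\<Sum>i<n. (norm (c i \<xi> - m i))^2))"
      by (rule integrable_mult_right)
    show "W \<in> borel_measurable M" unfolding W_def using mc by measurable
    show "AE \<xi> in M. norm (W \<xi>) \<le> norm ((1/real n) * (\<Sum>i<n. (norm (c i \<xi> - m i))^2))"
    proof (rule AE_I2)
      fix \<xi>
      have "W \<xi> \<le> (1/real n) * (\<Sum>i<n. (norm (c i \<xi> - m i))^2)"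
        using norm_avg_sq[OF n_pos, of "\<lambda>i. c i \<xi> - m i"] unfolding W_def by simp
      moreover have "0 \<le> W \<xi>" unfolding W_def by simp
      moreover have "0 \<le> (\<Sum>i<n. (norm (c i \<xi> - m i))^2)" by (rule sum_nonneg) simp
      ultimately show "norm (W \<xi>) \<le> norm ((1/real n) * (\<Sum>i<n. (norm (c i \<xi> - m i))^2))"
        by simp
    qed
  qed
  have W_bd: "(\<integral>\<xi>. W \<xi> \<partial>M) \<le> om_av * G"
    using C_av[rule_format, of v] unfolding W_def c_def m_def G_def by simp
  have iYV: "integrable M (\<lambda>\<xi>. (norm (Y \<xi> - (\<integral>\<xi>'. Y \<xi>' \<partial>M)))^2)"
    unfolding Yd using iW by simp
  note bvY = bias_var[OF M iY iYV, of a]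
  have EY_bd: "(\<integral>\<xi>. (norm (Y \<xi> - a))^2 \<partial>M) \<le> ef_r eta om_av nu * G"
  proof -
    have "(norm ((\<integral>\<xi>. Y \<xi> \<partial>M) - a))^2 \<le> (1 - nu + nu * eta)^2 * G"
    proof -
      have "(\<integral>\<xi>. Y \<xi> \<partial>M) - a = (1/real n) *\<^sub>R (\<Sum>i<n. nu *\<^sub>R m i - v i)"
        unfolding mY a_eq by (simp add: sum_subtractf scaleR_diff_right scaleR_sum_right)
      then have "(norm ((\<integral>\<xi>. Y \<xi> \<partial>M) - a))^2 \<le> (1/real n) * (\<Sum>i<n. (norm (nu *\<^sub>R m i - v i))^2)"
        using norm_avg_sq[OF n_pos, of "\<lambda>i. nu *\<^sub>R m i - v i"] by simp
      also have "\<dots> \<le> (1/real n) * (\<Sum>i<n. (1 - nu + nu * eta)^2 * (norm (v i))^2)"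
      proof (intro mult_left_mono sum_mono)
        fix i assume "i \<in> {..<n}"
        then have i: "i < n" by simp
        have "nu *\<^sub>R m i - v i = nu *\<^sub>R (m i - v i) - (1 - nu) *\<^sub>R v i" by (simp add: algebra_simps)
        then have "norm (nu *\<^sub>R m i - v i) \<le> nu * norm (m i - v i) + (1 - nu) * norm (v i)"
          using nu_pos nu_le by (metis norm_triangle_ineq4 norm_scaleR abs_of_nonneg less_imp_le diff_ge_0_iff_ge)
        also have "\<dots> \<le> nu * (eta * norm (v i)) + (1 - nu) * norm (v i)"
          using C_bias i nu_pos unfolding m_def c_def by (auto intro!: mult_left_mono)
        finally have "norm (nu *\<^sub>R m i - v i) \<le> (1 - nu + nu * eta) * norm (v i)" by (simp add: algebra_simps)
        then show "(norm (nu *\<^sub>R m i - v i))^2 \<le> (1 - nu + nu * eta)^2 * (norm (v i))^2"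
          by (metis power_mono norm_ge_zero power_mult_distrib)
      qed simp
      also have "\<dots> = (1 - nu + nu * eta)^2 * G" unfolding G_def by (simp add: sum_distrib_left)
      finally show ?thesis .
    qed
    moreover have "(\<integral>\<xi>. (norm (Y \<xi> - (\<integral>\<xi>'. Y \<xi>' \<partial>M)))^2 \<partial>M) \<le> nu^2 * om_av * G"
      unfolding Yd using W_bd by (simp add: mult.assoc mult_left_mono)
    ultimately show ?thesis unfolding bvY(2) ef_r_def by (simp add: algebra_simps)
  qed
  have iE2: "integrable M (\<lambda>\<xi>. \<Sum>i<n. E2 i \<xi>)"
    by (rule Bochner_Integration.integrable_sum) (use E2_int in auto)
  have intE2: "(\<integral>\<xi>. (\<Sum>i<n. E2 i \<xi>) \<partial>M) = (\<Sum>i<n. \<integral>\<xi>. E2 i \<xi> \<partial>M)"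
    by (rule Bochner_Integration.integral_sum) (use E2_int in auto)
  have sE2: "(1/real n) * (\<Sum>i<n. \<integral>\<xi>. E2 i \<xi> \<partial>M) \<le> ef_r eta om lam * G"
  proof -
    have "(\<Sum>i<n. \<integral>\<xi>. E2 i \<xi> \<partial>M) \<le> (\<Sum>i<n. ef_r eta om lam * (norm (v i))^2)"
      by (rule sum_mono) (use E2_bd in auto)
    then have "(1/real n) * (\<Sum>i<n. \<integral>\<xi>. E2 i \<xi> \<partial>M) \<le> (1/real n) * (\<Sum>i<n. ef_r eta om lam * (norm (v i))^2)"
      by (rule mult_left_mono) simp
    also have "\<dots> = ef_r eta om lam * G" unfolding G_def by (simp add: sum_distrib_left[symmetric])
    finally show ?thesis .
  qed
  have iYa: "integrable M (\<lambda>\<xi>. (norm (Y \<xi> - a))^2)" by (rule bvY(1))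
  define c0 where "c0 = F x - Finf - gamma/2 * (norm (gF x))^2"
  have B_eq: "B = (\<lambda>\<xi>. c0 + gamma/2 * (norm (Y \<xi> - a))^2 + K * (1 + s) * ((1/real n) * (\<Sum>i<n. E2 i \<xi>)))"
    by (simp add: B_def c0_def fun_eq_iff)
  have iB: "integrable M B" unfolding B_eq
    using iYa iE2 by (intro Bochner_Integration.integrable_add integrable_mult_right integrable_const) auto
  have intB: "(\<integral>\<xi>. B \<xi> \<partial>M) = c0 + gamma/2 * (\<integral>\<xi>. (norm (Y \<xi> - a))^2 \<partial>M)
      + K * (1 + s) * ((1/real n) * (\<Sum>i<n. \<integral>\<xi>. E2 i \<xi> \<partial>M))"
    unfolding B_eq using iYa iE2 intE2
    by (simp add: Bochner_Integration.integral_add integrable_mult_right prob_space del: integral_sum')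
  have intB_bd: "(\<integral>\<xi>. B \<xi> \<partial>M) \<le> c0 + K * G"
  proof -
    have "gamma/2 * (\<integral>\<xi>. (norm (Y \<xi> - a))^2 \<partial>M) \<le> gamma/2 * (ef_r eta om_av nu * G)"
      using EY_bd gamma_pos by (intro mult_left_mono) auto
    moreover have "K * (1 + s) * ((1/real n) * (\<Sum>i<n. \<integral>\<xi>. E2 i \<xi> \<partial>M)) \<le> K * (1 + s) * (ef_r eta om lam * G)"
      using sE2 K_nonneg s_pos by (intro mult_left_mono) auto
    moreover have "(K * (1 + s) * ef_r eta om lam + gamma / 2 * ef_r eta om_av nu) * G \<le> K * G"
      using coef1 G_nonneg by (rule mult_right_mono)
    ultimately show ?thesis unfolding intB by (simp add: algebra_simps)
  qed
  have B_nonneg: "0 \<le> B \<xi>" for \<xi> using QB[of \<xi>] Q_nonneg[of \<xi>] by linarith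
  have "(\<integral>\<^sup>+\<xi>. ennreal (Q \<xi>) \<partial>M) \<le> (\<integral>\<^sup>+\<xi>. ennreal (B \<xi>) \<partial>M)"
    by (intro nn_integral_mono) (simp add: QB ennreal_leI)
  also have "\<dots> = ennreal (\<integral>\<xi>. B \<xi> \<partial>M)"
    by (rule nn_integral_eq_integral[OF iB]) (simp add: B_nonneg)
  finally have "(\<integral>\<^sup>+\<xi>. ennreal (Q \<xi>) \<partial>M) + ennreal (gamma/2 * (norm (gF x))^2)
      \<le> ennreal (\<integral>\<xi>. B \<xi> \<partial>M) + ennreal (gamma/2 * (norm (gF x))^2)"
    by (rule add_right_mono)
  also have "\<dots> = ennreal ((\<integral>\<xi>. B \<xi> \<partial>M) + gamma/2 * (norm (gF x))^2)"
    using B_nonneg gamma_pos by (intro ennreal_plus[symmetric] integral_nonneg) auto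
  also have "\<dots> \<le> ennreal (F x - Finf + K * G)"
    using intB_bd unfolding c0_def by (intro ennreal_leI) simp
  finally show ?thesis unfolding Q_def x'_def g_def Y_def c_def v_def G_def .
qed

lemma efbv_Suc:
  "efbv_state C gf n gamma lam nu x0 h0 w (Suc k) =
    (let S = efbv_state C gf n gamma lam nu x0 h0 w k in
     (fst S - gamma *\<^sub>R (snd (snd S) + nu *\<^sub>R ((1/real n) *\<^sub>R (\<Sum>i<n. C i k (w k) (gf i (fst S) - fst (snd S) i)))),
      (\<lambda>i. fst (snd S) i + lam *\<^sub>R C i k (w k) (gf i (fst S) - fst (snd S) i)),
      snd (snd S) + lam *\<^sub>R ((1/real n) *\<^sub>R (\<Sum>i<n. C i k (w k) (gf i (fst S) - fst (snd S) i)))))"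
  by (cases "efbv_state C gf n gamma lam nu x0 h0 w k") (simp add: Let_def)

lemma efbv_dep:
  "(\<forall>j<k. w j = w' j) \<Longrightarrow> efbv_state C gf n gamma lam nu x0 h0 w k = efbv_state C gf n gamma lam nu x0 h0 w' k"
proof (induction k)
  case 0 then show ?case by simp
next
  case (Suc k)
  then have "efbv_state C gf n gamma lam nu x0 h0 w k = efbv_state C gf n gamma lam nu x0 h0 w' k" by auto
  moreover have "w k = w' k" using Suc.prems by auto
  ultimately show ?case by (simp only: efbv_Suc)
qed

lemma efbv_h_inv:
  "snd (snd (efbv_state C gf n gamma lam nu x0 h0 w k)) = (1/real n) *\<^sub>R (\<Sum>i<n. fst (snd (efbv_state C gf n gamma lam nu x0 h0 w k)) i)"
proof (induction k)
  case 0 then show ?case by simp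
next
  case (Suc k)
  obtain x hi h where e: "efbv_state C gf n gamma lam nu x0 h0 w k = (x, hi, h)" by (cases "efbv_state C gf n gamma lam nu x0 h0 w k") auto
  from Suc e have "h = (1/real n) *\<^sub>R (\<Sum>i<n. hi i)" by simp
  then show ?case
    by (simp add: e Let_def sum.distrib scaleR_add_right scaleR_sum_right[symmetric])
qed

lemma PiM_split_nn:
  fixes P :: "nat \<Rightarrow> 'w measure"
  assumes prob: "\<forall>t. prob_space (P t)"
    and f: "f \<in> borel_measurable (PiM UNIV P)"
  shows "(\<integral>\<^sup>+w. f w \<partial>PiM UNIV P) = (\<integral>\<^sup>+X. (\<integral>\<^sup>+x. f (X(k := x)) \<partial>P k) \<partial>PiM (UNIV - {k}) P)"
proof -
  have ins: "insert k (UNIV - {k}) = (UNIV :: nat set)" by auto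
  have D: "distr (P k \<Otimes>\<^sub>M PiM (UNIV - {k}) P) (PiM UNIV P) (\<lambda>(x, X). X(k := x)) = PiM UNIV P"
    using distr_pair_PiM_eq_PiM[of "UNIV - {k}" P k] prob unfolding ins by auto
  have T: "(\<lambda>(x, X). X(k := x)) \<in> measurable (P k \<Otimes>\<^sub>M PiM (UNIV - {k}) P) (PiM UNIV P)"
  proof -
    have "(\<lambda>p. (snd p)(k := fst p)) \<in> measurable (P k \<Otimes>\<^sub>M PiM (UNIV - {k}) P) (PiM UNIV P)"
      by (rule measurable_fun_upd[where J = "UNIV - {k}"]) auto
    then show ?thesis by (simp add: case_prod_beta')
  qed
  interpret pk: prob_space "P k" using prob by auto
  interpret pr: prob_space "PiM (UNIV - {k}) P" using prob by (intro prob_space_PiM) auto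
  interpret pair_sigma_finite "P k" "PiM (UNIV - {k}) P" by unfold_locales
  have fm: "(\<lambda>(x, X). f (X(k := x))) \<in> borel_measurable (P k \<Otimes>\<^sub>M PiM (UNIV - {k}) P)"
    using measurable_comp[OF T f] by (simp add: o_def case_prod_beta')
  have "(\<integral>\<^sup>+w. f w \<partial>PiM UNIV P) = (\<integral>\<^sup>+w. f w \<partial>distr (P k \<Otimes>\<^sub>M PiM (UNIV - {k}) P) (PiM UNIV P) (\<lambda>(x, X). X(k := x)))"
    by (simp add: D)
  also have "\<dots> = (\<integral>\<^sup>+p. f (case p of (x, X) \<Rightarrow> X(k := x)) \<partial>(P k \<Otimes>\<^sub>M PiM (UNIV - {k}) P))"
    using f by (intro nn_integral_distr T) (simp add: D)
  also have "\<dots> = (\<integral>\<^sup>+X. (\<integral>\<^sup>+x. f (X(k := x)) \<partial>P k) \<partial>PiM (UNIV - {k}) P)"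
    using nn_integral_snd[OF fm] by (simp add: case_prod_beta')
  finally show ?thesis .
qed

lemma aux_cancel: "(s::real) \<noteq> 0 \<Longrightarrow> t \<noteq> 0 \<Longrightarrow> r \<noteq> 0 \<Longrightarrow> (g::real) * a / (2 * s * t * r) * (t / s) = g * a / (2 * s^2 * r)"
  by (simp add: field_simps power2_eq_square)

lemma coef_facts:
  fixes r r_av gamma L L2 :: real
  assumes r: "0 < r" "r < 1" and rav: "0 < r_av" and g: "0 < gamma" and L: "0 \<le> L" and L2: "0 \<le> L2"
    and gle: "gamma \<le> 1 / (L + sqrt L2 * sqrt (r_av / r) * (1 / ef_s r))"
  shows "0 < ef_s r" "0 < ef_theta r r_av"
    "gamma/(2*ef_theta r r_av) * (1 + ef_s r) * r + gamma/2 * r_av \<le> gamma/(2*ef_theta r r_av)"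
    "gamma/(2*ef_theta r r_av) * (1 + 1/ef_s r) * L2 * gamma^2 \<le> gamma/2 * (1 - L*gamma)"
proof -
  define q where "q = sqrt r"
  have q: "0 < q" "q < 1" using r by (auto simp: q_def)
  have rq: "r = q^2" using r by (simp add: q_def)
  define s where "s = ef_s r"
  have s1: "1 + s = 1/q" by (simp add: s_def ef_s_def q_def)
  have "1 < 1/q" using q by (simp add: field_simps)
  then have s_pos: "0 < s" using s1 by linarith
  then show "0 < ef_s r" by (simp add: s_def)
  define th where "th = ef_theta r r_av"
  have th_eq: "th = s * (1 + s) * (r / r_av)" by (simp add: th_def ef_theta_def s_def)
  have th_pos: "0 < th" using s_pos r rav by (simp add: th_eq)
  then show "0 < ef_theta r r_av" by (simp add: th_def)
  have one: "(1 + s)^2 * r = 1" using q by (simp add: s1 rq power_divide)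
  define K where "K = gamma / (2 * th)"
  have nz: "s \<noteq> 0" "1 + s \<noteq> 0" "r \<noteq> 0" "r_av \<noteq> 0" using s_pos r rav by auto
  have K_eq: "K = gamma * r_av / (2 * s * (1 + s) * r)" unfolding K_def th_eq using nz by (simp add: field_simps)
  define D where "D = s * (1 + s) * r"
  have Dnz: "D \<noteq> 0" using nz by (simp add: D_def)
  have KD: "K = gamma * r_av / (2 * D)" unfolding K_eq D_def by (simp add: mult.assoc)
  have "K * D = gamma/2 * r_av" unfolding KD using Dnz by (simp add: field_simps)
  moreover have "(1 + s) * r * s = D" by (simp add: D_def algebra_simps)
  ultimately have e1: "K * ((1 + s) * r * s) = gamma/2 * r_av" by simp
  have "K * ((1 + s)^2 * r) = K * (1 + s) * r + K * ((1 + s) * r * s)" by (simp add: power2_eq_square algebra_simps)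
  then have "K * (1 + s) * r + gamma/2 * r_av = K * ((1 + s)^2 * r)" using e1 by simp
  then show "gamma/(2*ef_theta r r_av) * (1 + ef_s r) * r + gamma/2 * r_av \<le> gamma/(2*ef_theta r r_av)"
    using one by (simp add: K_def th_def s_def)
  define B where "B = sqrt L2 * sqrt (r_av / r) * (1 / s)"
  have B_nonneg: "0 \<le> B" using s_pos L2 r rav unfolding B_def by (intro mult_nonneg_nonneg) auto
  have B2: "B^2 = L2 * (r_av / r) / s^2"
    using L2 r rav by (simp add: B_def power_mult_distrib power_divide)
  have LB: "0 < L + B"
  proof (rule ccontr)
    assume "\<not> 0 < L + B"
    then have "L + B = 0" using L B_nonneg by simp
    then show False using gle g by (simp add: B_def s_def)
  qed
  have "gamma * (L + B) \<le> 1" using gle LB by (simp add: B_def s_def pos_le_divide_eq)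
  then have gB: "gamma * B \<le> 1 - L * gamma" and gB1: "gamma * B \<le> 1" using g L by (simp_all add: algebra_simps) (smt (verit) mult_nonneg_nonneg)
  have "(gamma * B)^2 \<le> gamma * B" using gB1 B_nonneg g by (simp add: power2_eq_square mult_left_le)
  also have "\<dots> \<le> 1 - L * gamma" by (rule gB)
  finally have gB2: "(gamma * B)^2 \<le> 1 - L * gamma" .
  have "1 + 1/s = (1+s)/s" using nz by (simp add: field_simps)
  then have K2: "K * (1 + 1/s) = gamma * r_av / (2 * s^2 * r)" unfolding K_eq using aux_cancel[OF nz(1,2,3)] by simp
  have "K * (1 + 1/s) * L2 * gamma^2 = gamma/2 * (gamma * B)^2"
    unfolding K2 power_mult_distrib B2 using nz by (simp add: field_simps power2_eq_square)
  also have "\<dots> \<le> gamma/2 * (1 - L*gamma)" using gB2 g by (intro mult_left_mono) auto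
  finally show "gamma/(2*ef_theta r r_av) * (1 + 1/ef_s r) * L2 * gamma^2 \<le> gamma/2 * (1 - L*gamma)"
    by (simp add: K_def th_def s_def)
qed

lemma meas_C:
  assumes "(\<lambda>(\<xi>, x). Cf \<xi> x) \<in> borel_measurable (N \<Otimes>\<^sub>M borel)"
    and "f \<in> measurable M N" and "g \<in> borel_measurable M"
  shows "(\<lambda>w. Cf (f w) (g w)) \<in> borel_measurable M"
proof -
  have "(\<lambda>w. (f w, g w)) \<in> measurable M (N \<Otimes>\<^sub>M borel)" using assms(2,3) by (rule measurable_Pair)
  from measurable_comp[OF this assms(1)] show ?thesis by (simp add: o_def)
qed

lemma efbv_meas:
  fixes P :: "nat \<Rightarrow> 'w measure" and C :: "nat \<Rightarrow> nat \<Rightarrow> 'w \<Rightarrow> real^'d \<Rightarrow> real^'d"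
  assumes C_meas: "\<forall>i<n. \<forall>t. (\<lambda>(\<xi>, x). C i t \<xi> x) \<in> borel_measurable (P t \<Otimes>\<^sub>M borel)"
    and gf_meas: "\<forall>i<n. gf i \<in> borel_measurable borel"
  shows "(\<lambda>w. fst (efbv_state C gf n gamma lam nu x0 h0 w k)) \<in> borel_measurable (PiM UNIV P) \<and>
    (\<forall>i<n. (\<lambda>w. fst (snd (efbv_state C gf n gamma lam nu x0 h0 w k)) i) \<in> borel_measurable (PiM UNIV P))"
proof (induction k)
  case 0 then show ?case by simp
next
  case (Suc k)
  define X where "X w = fst (efbv_state C gf n gamma lam nu x0 h0 w k)" for w
  define HI where "HI w = fst (snd (efbv_state C gf n gamma lam nu x0 h0 w k))" for w
  have mX: "X \<in> borel_measurable (PiM UNIV P)" unfolding X_def[abs_def] using Suc by simp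
  have mHI: "(\<lambda>w. HI w i) \<in> borel_measurable (PiM UNIV P)" if "i < n" for i using Suc that by (simp add: HI_def)
  have mD: "(\<lambda>w. C i k (w k) (gf i (X w) - HI w i)) \<in> borel_measurable (PiM UNIV P)" if i: "i < n" for i
  proof -
    have a: "(\<lambda>(\<xi>, x). C i k \<xi> x) \<in> borel_measurable (P k \<Otimes>\<^sub>M borel)" using C_meas i by blast
    have b: "(\<lambda>w. w k) \<in> measurable (PiM UNIV P) (P k)" by (rule measurable_component_singleton) simp
    have "(\<lambda>w. gf i (X w)) \<in> borel_measurable (PiM UNIV P)"
      using measurable_comp[OF mX, of "gf i" borel] gf_meas i by (simp add: o_def)
    then have c: "(\<lambda>w. gf i (X w) - HI w i) \<in> borel_measurable (PiM UNIV P)"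
      using mHI[OF i] by (rule borel_measurable_diff)
    show ?thesis using meas_C[OF a b c] by simp
  qed
  have mH: "(\<lambda>w. snd (snd (efbv_state C gf n gamma lam nu x0 h0 w k))) \<in> borel_measurable (PiM UNIV P)"
    unfolding efbv_h_inv[of C gf n gamma lam nu x0 h0 _ k] HI_def[symmetric]
    using mHI by (intro borel_measurable_scaleR borel_measurable_const borel_measurable_sum) auto
  have mS: "(\<lambda>w. \<Sum>i<n. C i k (w k) (gf i (X w) - HI w i)) \<in> borel_measurable (PiM UNIV P)"
    using mD by (intro borel_measurable_sum) auto
  show ?case
    unfolding efbv_Suc Let_def X_def[symmetric] HI_def[symmetric] fst_conv snd_conv
  proof (intro conjI allI impI)
    show "(\<lambda>w. X w - gamma *\<^sub>R (snd (snd (efbv_state C gf n gamma lam nu x0 h0 w k)) + nu *\<^sub>R ((1 / real n) *\<^sub>R (\<Sum>i<n. C i k (w k) (gf i (X w) - HI w i)))))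
       \<in> borel_measurable (PiM UNIV P)"
      using mX mH mS by (intro borel_measurable_diff borel_measurable_scaleR borel_measurable_const borel_measurable_add) auto
    fix i assume i: "i < n"
    show "(\<lambda>w. HI w i + lam *\<^sub>R C i k (w k) (gf i (X w) - HI w i)) \<in> borel_measurable (PiM UNIV P)"
      using mHI[OF i] mD[OF i] by (intro borel_measurable_add borel_measurable_scaleR borel_measurable_const) auto
  qed
qed

theorem theorem3:
  fixes f :: "nat \<Rightarrow> real^'d \<Rightarrow> real" and gf :: "nat \<Rightarrow> real^'d \<Rightarrow> real^'d"
    and F :: "real^'d \<Rightarrow> real" and gF :: "real^'d \<Rightarrow> real^'d"
    and Lf :: "nat \<Rightarrow> real" and L :: real and n :: nat
    and P :: "nat \<Rightarrow> 'w measure" and C :: "nat \<Rightarrow> nat \<Rightarrow> 'w \<Rightarrow> real^'d \<Rightarrow> real^'d"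
    and eta om om_av gamma lam nu :: real
    and x0 :: "real^'d" and h0 :: "nat \<Rightarrow> real^'d" and t :: nat
  assumes n_pos: "n \<ge> 1"
    and grad_i: "\<forall>i<n. \<forall>x. GDERIV (f i) x :> gf i x"
    and Lf_nonneg: "\<forall>i<n. 0 \<le> Lf i"
    and lip_i: "\<forall>i<n. \<forall>x y. norm (gf i x - gf i y) \<le> Lf i * norm (x - y)"
    and F_def: "F = (\<lambda>x. (1 / real n) * (\<Sum>i<n. f i x))"
    and grad_F: "\<forall>x. GDERIV F x :> gF x"
    and L_nonneg: "0 \<le> L"
    and lip_F: "\<forall>x y. norm (gF x - gF y) \<le> L * norm (x - y)"
    and L_le: "L \<le> sqrt ((1 / real n) * (\<Sum>i<n. (Lf i)^2))"
    and F_bdd: "bdd_below (range F)"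
    and prob: "\<forall>t. prob_space (P t)"
    and C_meas: "\<forall>i<n. \<forall>t. (\<lambda>(\<xi>, x). C i t \<xi> x) \<in> borel_measurable (P t \<Otimes>\<^sub>M borel)"
    and C_int: "\<forall>i<n. \<forall>t x. integrable (P t) (\<lambda>\<xi>. C i t \<xi> x)"
    and C_bias: "\<forall>i<n. \<forall>t x. norm ((\<integral>\<xi>. C i t \<xi> x \<partial>P t) - x) \<le> eta * norm x"
    and C_var_int: "\<forall>i<n. \<forall>t x. integrable (P t)
          (\<lambda>\<xi>. (norm (C i t \<xi> x - (\<integral>\<xi>'. C i t \<xi>' x \<partial>P t)))^2)"
    and C_var: "\<forall>i<n. \<forall>t x.
          (\<integral>\<xi>. (norm (C i t \<xi> x - (\<integral>\<xi>'. C i t \<xi>' x \<partial>P t)))^2 \<partial>P t) \<le> om * (norm x)^2"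
    and eta_ge: "0 \<le> eta" and eta_lt: "eta < 1"
    and om_ge: "0 \<le> om" and om_av_ge: "0 \<le> om_av" and om_av_le: "om_av \<le> om"
    and C_av: "\<forall>t (xs :: nat \<Rightarrow> real^'d).
          (\<integral>\<xi>. (norm ((1 / real n) *\<^sub>R (\<Sum>i<n. C i t \<xi> (xs i) - (\<integral>\<xi>'. C i t \<xi>' (xs i) \<partial>P t))))^2 \<partial>P t)
            \<le> om_av / real n * (\<Sum>i<n. (norm (xs i))^2)"
    and nu_pos: "0 < nu" and nu_le: "nu \<le> 1"
    and lam_pos: "0 < lam" and lam_le: "lam \<le> 1"
    and r_pos: "0 < ef_r eta om lam" and r_av_pos: "0 < ef_r eta om_av nu"
    and r_lt: "ef_r eta om lam < 1"
    and gamma_pos: "0 < gamma"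
    and gamma_le: "gamma \<le> 1 / (L + sqrt ((1 / real n) * (\<Sum>i<n. (Lf i)^2))
                      * sqrt (ef_r eta om_av nu / ef_r eta om lam) * (1 / ef_s (ef_r eta om lam)))"
    and t_pos: "t \<ge> 1"
  shows "(\<integral>(w, k). (norm (gF (efbv_x C gf n gamma lam nu x0 h0 w k)))^2
            \<partial>(PiM UNIV P \<Otimes>\<^sub>M measure_pmf (pmf_of_set {..<t})))
         \<le> 2 * (F x0 - (INF x. F x)) / (gamma * real t)
           + ((1 / real n) * (\<Sum>i<n. (norm (gf i x0 - h0 i))^2))
             / (ef_theta (ef_r eta om lam) (ef_r eta om_av nu) * real t)"
proof -
  define Pi where "Pi = PiM UNIV P"
  define S where "S k w = efbv_state C gf n gamma lam nu x0 h0 w k" for k w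
  define XX where "XX k w = fst (S k w)" for k w
  define HH where "HH k w = fst (snd (S k w))" for k w
  define Finf where "Finf = (INF x. F x)"
  define r where "r = ef_r eta om lam"
  define rav where "rav = ef_r eta om_av nu"
  define th where "th = ef_theta r rav"
  define K where "K = gamma / (2 * th)"
  define Psi where "Psi k w = F (XX k w) - Finf + K * ((1/real n) * (\<Sum>i<n. (norm (gf i (XX k w) - HH k w i))^2))" for k w
  have np: "real n > 0" using n_pos by simp
  have L2_nonneg: "0 \<le> (1/real n) * (\<Sum>i<n. (Lf i)^2)" by (intro mult_nonneg_nonneg sum_nonneg) auto
  have Finf_le: "Finf \<le> F z" for z unfolding Finf_def using F_bdd by (intro cINF_lower) auto
  note cf = coef_facts[OF r_pos r_lt r_av_pos gamma_pos L_nonneg L2_nonneg gamma_le]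
  have th_pos: "0 < th" using cf(2) by (simp add: th_def r_def rav_def)
  have K_nonneg: "0 \<le> K" using th_pos gamma_pos by (simp add: K_def)
  have coef1: "K * (1 + ef_s r) * ef_r eta om lam + gamma / 2 * ef_r eta om_av nu \<le> K"
    using cf(3) by (simp add: K_def th_def r_def rav_def)
  have coef2: "K * (1 + 1/ef_s r) * ((1/real n) * (\<Sum>i<n. (Lf i)^2)) * gamma^2 \<le> gamma / 2 * (1 - L * gamma)"
    using cf(4) by (simp add: K_def th_def r_def rav_def)
  have s_pos: "0 < ef_s r" using cf(1) by (simp add: r_def)
  have gF_eq: "gF z = (1/real n) *\<^sub>R (\<Sum>i<n. gf i z)" for z by (rule grad_avg[OF grad_i F_def grad_F])
  have desc: "F y \<le> F z + gF z \<bullet> (y - z) + L/2 * (norm (y - z))^2" for y z by (rule descent[OF grad_F lip_F])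
  have gf_meas: "\<forall>i<n. gf i \<in> borel_measurable borel"
  proof (intro allI impI borel_measurable_continuous_onI)
    fix i assume i: "i < n"
    have "lipschitz_on (Lf i) UNIV (gf i)" unfolding lipschitz_on_def
      using Lf_nonneg lip_i i by (auto simp: dist_norm)
    then show "continuous_on UNIV (gf i)" by (rule lipschitz_on_continuous_on)
  qed
  have gF_meas: "gF \<in> borel_measurable borel"
  proof (intro borel_measurable_continuous_onI)
    have "lipschitz_on L UNIV gF" unfolding lipschitz_on_def
      using L_nonneg lip_F by (auto simp: dist_norm)
    then show "continuous_on UNIV gF" by (rule lipschitz_on_continuous_on)
  qed
  have F_meas: "F \<in> borel_measurable borel"
  proof (intro borel_measurable_continuous_onI continuous_at_imp_continuous_on ballI)
    fix z :: "real^'d"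
    show "isCont F z" using grad_F unfolding gderiv_def by (meson has_derivative_continuous)
  qed
  have mst: "XX k \<in> borel_measurable Pi \<and> (\<forall>i<n. (\<lambda>w. HH k w i) \<in> borel_measurable Pi)" for k
    using efbv_meas[OF C_meas gf_meas, of gamma lam nu x0 h0 k] unfolding Pi_def XX_def[abs_def] HH_def S_def by simp
  have Psi_meas: "(\<lambda>w. Psi k w) \<in> borel_measurable Pi" for k
  proof -
    have mX: "XX k \<in> borel_measurable Pi" using mst by blast
    have mF: "(\<lambda>w. F (XX k w)) \<in> borel_measurable Pi" using measurable_comp[OF mX F_meas] by (simp add: o_def)
    have mg: "(\<lambda>w. gf i (XX k w)) \<in> borel_measurable Pi" if "i < n" for i
      using measurable_comp[OF mX, of "gf i"] gf_meas that by (simp add: o_def)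
    have "(\<lambda>w. \<Sum>i<n. (norm (gf i (XX k w) - HH k w i))^2) \<in> borel_measurable Pi"
      using mg mst by (intro borel_measurable_sum borel_measurable_power measurable_compose[OF _ borel_measurable_norm] borel_measurable_diff) auto
    then show ?thesis unfolding Psi_def using mF by (intro borel_measurable_add borel_measurable_diff borel_measurable_times borel_measurable_const) auto
  qed
  have G_meas: "(\<lambda>w. (norm (gF (XX k w)))^2) \<in> borel_measurable Pi" for k
  proof -
    have mX: "XX k \<in> borel_measurable Pi" using mst by blast
    have "(\<lambda>w. gF (XX k w)) \<in> borel_measurable Pi" using measurable_comp[OF mX gF_meas] by (simp add: o_def)
    then show ?thesis by (intro borel_measurable_power measurable_compose[OF _ borel_measurable_norm]) auto
  qed
  have Psi_nonneg: "0 \<le> Psi k w" for k w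
  proof -
    have "0 \<le> K * ((1/real n) * (\<Sum>i<n. (norm (gf i (XX k w) - HH k w i))^2))"
      using K_nonneg by (intro mult_nonneg_nonneg sum_nonneg) auto
    then show ?thesis unfolding Psi_def using Finf_le[of "XX k w"] by linarith
  qed
  have dep: "S k (w(k := z)) = S k w" for k w z unfolding S_def by (rule efbv_dep) auto
  have step: "(\<integral>\<^sup>+w. ennreal (Psi (Suc k) w) \<partial>Pi) + (\<integral>\<^sup>+w. ennreal (gamma/2 * (norm (gF (XX k w)))^2) \<partial>Pi)
      \<le> (\<integral>\<^sup>+w. ennreal (Psi k w) \<partial>Pi)" for k
  proof -
    define Pi' where "Pi' = PiM (UNIV - {k}) P"
    define q where "q w = ennreal (gamma/2 * (norm (gF (XX k w)))^2)" for w
    have mPsi: "(\<lambda>w. ennreal (Psi j w)) \<in> borel_measurable Pi" for j using Psi_meas by measurable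
    have mq: "q \<in> borel_measurable Pi" unfolding q_def using G_meas[of k] by measurable
    have pk: "prob_space (P k)" using prob by blast
    have mupd: "(\<lambda>z. w(k := z)) \<in> measurable (P k) Pi" if "w \<in> space Pi'" for w
    proof -
      have "(\<lambda>z. ((\<lambda>_. w) z)(k := z)) \<in> measurable (P k) (PiM UNIV P)"
        by (rule measurable_fun_upd[where J = "UNIV - {k}"]) (use that in \<open>auto simp: Pi'_def\<close>)
      then show ?thesis by (simp add: Pi_def)
    qed
    have pw: "(\<integral>\<^sup>+z. ennreal (Psi (Suc k) (w(k := z))) + q (w(k := z)) \<partial>P k) \<le> ennreal (Psi k w)"
      if w: "w \<in> space Pi'" for w
    proof -
      note mz = mupd[OF w]
      have dep': "efbv_state C gf n gamma lam nu x0 h0 (w(k := z)) k = efbv_state C gf n gamma lam nu x0 h0 w k" for z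
        using dep[of k w z] by (simp add: S_def)
      have Sf: "S (Suc k) (w(k := z)) =
          (fst (S k w) - gamma *\<^sub>R (snd (snd (S k w)) + nu *\<^sub>R ((1/real n) *\<^sub>R (\<Sum>i<n. C i k z (gf i (fst (S k w)) - fst (snd (S k w)) i)))),
           (\<lambda>i. fst (snd (S k w)) i + lam *\<^sub>R C i k z (gf i (fst (S k w)) - fst (snd (S k w)) i)),
           snd (snd (S k w)) + lam *\<^sub>R ((1/real n) *\<^sub>R (\<Sum>i<n. C i k z (gf i (fst (S k w)) - fst (snd (S k w)) i))))" for z
        by (simp only: S_def efbv_Suc Let_def dep' fun_upd_same)
      have PsiS: "Psi (Suc k) (w(k := z)) =
          F (fst (S k w) - gamma *\<^sub>R (snd (snd (S k w)) + nu *\<^sub>R ((1/real n) *\<^sub>R (\<Sum>i<n. C i k z (gf i (fst (S k w)) - fst (snd (S k w)) i))))) - Finf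
          + K * ((1/real n) * (\<Sum>i<n. (norm (gf i (fst (S k w) - gamma *\<^sub>R (snd (snd (S k w)) + nu *\<^sub>R ((1/real n) *\<^sub>R (\<Sum>i<n. C i k z (gf i (fst (S k w)) - fst (snd (S k w)) i)))))
               - (fst (snd (S k w)) i + lam *\<^sub>R C i k z (gf i (fst (S k w)) - fst (snd (S k w)) i))))^2))" for z
        unfolding Psi_def XX_def HH_def Sf fst_conv snd_conv ..
      have qc: "q (w(k := z)) = q w" for z unfolding q_def XX_def dep ..
      have C_int_k: "\<forall>i<n. \<forall>x. integrable (P k) (\<lambda>\<xi>. C i k \<xi> x)" using C_int by blast
      have C_bias_k: "\<forall>i<n. \<forall>x. norm ((\<integral>\<xi>. C i k \<xi> x \<partial>P k) - x) \<le> eta * norm x" using C_bias by blast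
      have C_var_int_k: "\<forall>i<n. \<forall>x. integrable (P k) (\<lambda>\<xi>. (norm (C i k \<xi> x - (\<integral>\<xi>'. C i k \<xi>' x \<partial>P k)))^2)"
        using C_var_int by blast
      have C_var_k: "\<forall>i<n. \<forall>x. (\<integral>\<xi>. (norm (C i k \<xi> x - (\<integral>\<xi>'. C i k \<xi>' x \<partial>P k)))^2 \<partial>P k) \<le> om * (norm x)^2"
        using C_var by blast
      have C_av_k: "\<forall>(xs :: nat \<Rightarrow> real^'d).
          (\<integral>\<xi>. (norm ((1 / real n) *\<^sub>R (\<Sum>i<n. C i k \<xi> (xs i) - (\<integral>\<xi>'. C i k \<xi>' (xs i) \<partial>P k))))^2 \<partial>P k)
            \<le> om_av / real n * (\<Sum>i<n. (norm (xs i))^2)" using C_av by blast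
      have h_eq: "snd (snd (S k w)) = (1/real n) *\<^sub>R (\<Sum>i<n. fst (snd (S k w)) i)"
        unfolding S_def by (rule efbv_h_inv)
      have os: "(\<integral>\<^sup>+z. ennreal (Psi (Suc k) (w(k := z))) \<partial>P k) + ennreal (gamma/2 * (norm (gF (fst (S k w))))^2)
          \<le> ennreal (Psi k w)"
        unfolding PsiS unfolding Psi_def XX_def HH_def
        by (rule one_step[where M="P k" and Ck="\<lambda>i. C i k" and s="ef_s r" and eta=eta and om=om and om_av=om_av and Lf=Lf and L=L,
              OF n_pos pk gF_eq h_eq desc lip_i Lf_nonneg Finf_le C_int_k C_bias_k C_var_int_k C_var_k eta_ge C_av_k
              nu_pos nu_le lam_pos lam_le gamma_pos K_nonneg s_pos coef1 coef2])
      have "(\<integral>\<^sup>+z. ennreal (Psi (Suc k) (w(k := z))) + q (w(k := z)) \<partial>P k)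
          = (\<integral>\<^sup>+z. ennreal (Psi (Suc k) (w(k := z))) \<partial>P k) + (\<integral>\<^sup>+z. q (w(k := z)) \<partial>P k)"
        using measurable_comp[OF mz mPsi[of "Suc k"]] measurable_comp[OF mz mq]
        by (intro nn_integral_add) (auto simp: o_def)
      also have "(\<integral>\<^sup>+z. q (w(k := z)) \<partial>P k) = q w"
        unfolding qc using prob_space.emeasure_space_1[OF pk] by simp
      also have "q w = ennreal (gamma/2 * (norm (gF (fst (S k w))))^2)" unfolding q_def XX_def ..
      finally have eq: "(\<integral>\<^sup>+z. ennreal (Psi (Suc k) (w(k := z))) + q (w(k := z)) \<partial>P k)
          = (\<integral>\<^sup>+z. ennreal (Psi (Suc k) (w(k := z))) \<partial>P k) + ennreal (gamma/2 * (norm (gF (fst (S k w))))^2)" .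
      show ?thesis unfolding eq by (rule os)
    qed
    have "(\<integral>\<^sup>+w. ennreal (Psi (Suc k) w) \<partial>Pi) + (\<integral>\<^sup>+w. q w \<partial>Pi) = (\<integral>\<^sup>+w. ennreal (Psi (Suc k) w) + q w \<partial>Pi)"
      using mPsi mq by (intro nn_integral_add[symmetric]) auto
    also have "\<dots> = (\<integral>\<^sup>+w. (\<integral>\<^sup>+z. ennreal (Psi (Suc k) (w(k := z))) + q (w(k := z)) \<partial>P k) \<partial>Pi')"
      unfolding Pi'_def Pi_def by (rule PiM_split_nn[OF prob]) (use mPsi mq in \<open>auto simp: Pi_def\<close>)
    also have "\<dots> \<le> (\<integral>\<^sup>+w. ennreal (Psi k w) \<partial>Pi')"
      by (rule nn_integral_mono) (rule pw)
    also have "\<dots> = (\<integral>\<^sup>+w. (\<integral>\<^sup>+z. ennreal (Psi k (w(k := z))) \<partial>P k) \<partial>Pi')"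
    proof (rule nn_integral_cong)
      fix w
      have "Psi k (w(k := z)) = Psi k w" for z unfolding Psi_def XX_def HH_def dep ..
      then show "ennreal (Psi k w) = (\<integral>\<^sup>+z. ennreal (Psi k (w(k := z))) \<partial>P k)"
        using prob_space.emeasure_space_1[OF pk] by simp
    qed
    also have "\<dots> = (\<integral>\<^sup>+w. ennreal (Psi k w) \<partial>Pi)"
      unfolding Pi'_def Pi_def by (rule PiM_split_nn[OF prob, symmetric]) (use mPsi in \<open>auto simp: Pi_def\<close>)
    finally show ?thesis unfolding q_def .
  qed
  define G0 where "G0 = (1 / real n) * (\<Sum>i<n. (norm (gf i x0 - h0 i))^2)"
  define Psi0 where "Psi0 = F x0 - Finf + K * G0"
  have Psi0_eq: "Psi 0 w = Psi0" for w by (simp add: Psi_def Psi0_def G0_def XX_def HH_def S_def)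
  have probPi: "prob_space Pi" unfolding Pi_def using prob by (intro prob_space_PiM) auto
  define a where "a k = (\<integral>\<^sup>+w. ennreal (gamma/2 * (norm (gF (XX k w)))^2) \<partial>Pi)" for k
  have iter: "(\<integral>\<^sup>+w. ennreal (Psi T w) \<partial>Pi) + (\<Sum>k<T. a k) \<le> ennreal Psi0" for T
  proof (induction T)
    case 0
    show ?case using prob_space.emeasure_space_1[OF probPi] by (simp add: Psi0_eq)
  next
    case (Suc T)
    have "(\<integral>\<^sup>+w. ennreal (Psi (Suc T) w) \<partial>Pi) + (\<Sum>k<Suc T. a k)
        = ((\<integral>\<^sup>+w. ennreal (Psi (Suc T) w) \<partial>Pi) + a T) + (\<Sum>k<T. a k)" by (simp add: ac_simps)
    also have "\<dots> \<le> (\<integral>\<^sup>+w. ennreal (Psi T w) \<partial>Pi) + (\<Sum>k<T. a k)"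
      using step[of T] unfolding a_def by (rule add_right_mono)
    also have "\<dots> \<le> ennreal Psi0" by (rule Suc.IH)
    finally show ?case .
  qed
  have sum_a: "(\<Sum>k<t. a k) \<le> ennreal Psi0"
    using iter[of t] by (meson add_increasing order_trans zero_le order_refl)
  define A where "A = (\<Sum>k<t. \<integral>\<^sup>+w. ennreal ((norm (gF (XX k w)))^2) \<partial>Pi)"
  have aA: "(\<Sum>k<t. a k) = ennreal (gamma/2) * A"
  proof -
    have "a k = ennreal (gamma/2) * (\<integral>\<^sup>+w. ennreal ((norm (gF (XX k w)))^2) \<partial>Pi)" for k
    proof -
      have "a k = (\<integral>\<^sup>+w. ennreal (gamma/2) * ennreal ((norm (gF (XX k w)))^2) \<partial>Pi)"
        unfolding a_def by (rule nn_integral_cong, rule ennreal_mult) (use gamma_pos in auto)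
      also have "\<dots> = ennreal (gamma/2) * (\<integral>\<^sup>+w. ennreal ((norm (gF (XX k w)))^2) \<partial>Pi)"
        by (rule nn_integral_cmult, rule measurable_compose[OF G_meas[of k] measurable_ennreal])
      finally show ?thesis .
    qed
    then show ?thesis unfolding A_def by (simp add: sum_distrib_left)
  qed
  have Psi0_nonneg: "0 \<le> Psi0" using Psi_nonneg[of 0 undefined] Psi0_eq by simp
  obtain aa where A_eq: "A = ennreal aa" and aa_nonneg: "0 \<le> aa"
  proof (cases A)
    case (real r) then show ?thesis using that by blast
  next
    case top
    then have "ennreal (gamma/2) * A = top" using gamma_pos by (simp add: ennreal_mult_top)
    then show ?thesis using sum_a aA by (metis ennreal_neq_top top_unique)
  qed
  have "ennreal (gamma/2 * aa) = ennreal (gamma/2) * ennreal aa" using gamma_pos aa_nonneg by (intro ennreal_mult) auto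
  then have "ennreal (gamma/2 * aa) \<le> ennreal Psi0" using sum_a aA A_eq by simp
  then have aa_le: "gamma/2 * aa \<le> Psi0" using Psi0_nonneg by simp
  have tpos: "0 < real t" using t_pos by simp
  define RHS where "RHS = 2 * (F x0 - Finf) / (gamma * real t) + G0 / (th * real t)"
  have aa_RHS: "aa / real t \<le> RHS"
  proof -
    have "aa \<le> 2 / gamma * Psi0" using aa_le gamma_pos by (simp add: field_simps)
    also have "2 / gamma * Psi0 = 2 * (F x0 - Finf) / gamma + G0 / th"
      unfolding Psi0_def K_def using gamma_pos th_pos by (simp add: field_simps)
    finally have "aa / real t \<le> (2 * (F x0 - Finf) / gamma + G0 / th) / real t"
      using tpos by (intro divide_right_mono) auto
    also have "\<dots> = RHS" unfolding RHS_def using tpos gamma_pos th_pos by (simp add: field_simps)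
    finally show ?thesis .
  qed
  have G0_nonneg: "0 \<le> G0" unfolding G0_def by (intro mult_nonneg_nonneg sum_nonneg) auto
  have RHS_nonneg: "0 \<le> RHS" unfolding RHS_def using Finf_le[of x0] G0_nonneg tpos gamma_pos th_pos by simp
  let ?M = "PiM UNIV P \<Otimes>\<^sub>M measure_pmf (pmf_of_set {..<t})"
  have gk_meas: "(\<lambda>z. ennreal ((norm (gF (XX (snd z) (fst z))))^2)) \<in> borel_measurable ?M"
  proof -
    have mi: "(\<lambda>z. ennreal ((norm (gF (XX i (fst z))))^2)) \<in> borel_measurable ?M" for i
      using measurable_comp[OF measurable_fst measurable_compose[OF G_meas[of i, unfolded Pi_def] measurable_ennreal]]
      by (simp add: o_def)
    have ms: "snd \<in> measurable ?M (count_space UNIV)"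
      using measurable_snd[of "PiM UNIV P" "measure_pmf (pmf_of_set {..<t})"]
      by (simp add: measurable_cong_sets[OF refl sets_measure_pmf_count_space])
    show ?thesis
      by (rule measurable_compose_countable'[where f="\<lambda>i z. ennreal ((norm (gF (XX i (fst z))))^2)" and g=snd and I=UNIV])
         (use mi ms in auto)
  qed
  have "(\<integral>\<^sup>+z. ennreal ((norm (gF (XX (snd z) (fst z))))^2) \<partial>?M)
      = (\<integral>\<^sup>+w. (\<integral>\<^sup>+k. ennreal ((norm (gF (XX k w)))^2) \<partial>measure_pmf (pmf_of_set {..<t})) \<partial>PiM UNIV P)"
    using measure_pmf.nn_integral_fst[OF gk_meas] by simp
  also have "\<dots> = (\<integral>\<^sup>+w. (\<Sum>k<t. ennreal ((norm (gF (XX k w)))^2)) / of_nat t \<partial>PiM UNIV P)"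
    using t_pos by (subst nn_integral_pmf_of_set) (auto simp: lessThan_empty_iff)
  also have "\<dots> = A / of_nat t"
  proof -
    have ms: "(\<lambda>w. ennreal ((norm (gF (XX k w)))^2)) \<in> borel_measurable (PiM UNIV P)" for k
      using measurable_compose[OF G_meas[of k] measurable_ennreal] by (simp add: Pi_def)
    have "(\<integral>\<^sup>+w. (\<Sum>k<t. ennreal ((norm (gF (XX k w)))^2)) / of_nat t \<partial>PiM UNIV P)
        = (\<integral>\<^sup>+w. (\<Sum>k<t. ennreal ((norm (gF (XX k w)))^2)) \<partial>PiM UNIV P) / of_nat t"
      by (rule nn_integral_divide) (rule borel_measurable_sum, rule ms)
    also have "(\<integral>\<^sup>+w. (\<Sum>k<t. ennreal ((norm (gF (XX k w)))^2)) \<partial>PiM UNIV P)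
        = (\<Sum>k<t. \<integral>\<^sup>+w. ennreal ((norm (gF (XX k w)))^2) \<partial>PiM UNIV P)"
      by (rule nn_integral_sum) (rule ms)
    finally show ?thesis unfolding A_def Pi_def .
  qed
  also have "\<dots> = ennreal (aa / real t)"
    unfolding A_eq using aa_nonneg tpos by (simp add: ennreal_of_nat_eq_real_of_nat divide_ennreal)
  also have "\<dots> \<le> ennreal RHS" using aa_RHS by (rule ennreal_leI)
  finally have nn: "(\<integral>\<^sup>+z. ennreal ((norm (gF (XX (snd z) (fst z))))^2) \<partial>?M) \<le> ennreal RHS" .
  have fe: "(\<lambda>(w, k). (norm (gF (efbv_x C gf n gamma lam nu x0 h0 w k)))^2) = (\<lambda>z. (norm (gF (XX (snd z) (fst z))))^2)"
    by (auto simp: efbv_x_def XX_def S_def fun_eq_iff)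
  have "(\<integral>z. (\<lambda>(w, k). (norm (gF (efbv_x C gf n gamma lam nu x0 h0 w k)))^2) z \<partial>?M) \<le> RHS"
    unfolding fe by (rule integral_real_bounded[OF RHS_nonneg nn])
  then show ?thesis by (simp add: RHS_def Finf_def G0_def th_def r_def rav_def)
qed

end
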